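(* In the model described in the context, suppose that for some time slot $t\in\{0,\dots,T-1\}$ and some data item $m$ the set $\mathcal{B}_t(m)$ is non-empty. Then $\hat{x}_t>0$, where $$\hat{x}_t=\arg\min_{0\le x\le S_{\min}}\ \mathbb{E}\Bigl[C\Bigl(L_{t-1}+\sum_{j=1}^M\sum_{k\in\mathcal{B}_t(j)}x\Bigr)+C\Bigl(L_t-\sum_{j=1}^M\sum_{k\in\mathcal{B}_t(j)}x\,I_{k,t}(j)\Bigr)\Bigr].$$
   Context: There are $N$ users, $M$ data items and a period of $T$ time slots. Item $m$ has size $S(m)>0$, and $S_{\min}=\min_m S(m)$. For each user $n$ and slot $t$ there is a demand profile $\mathbf{P}_{n,t}=(P_{n,t}(m))_{m=1}^M$ with $P_{n,t}(m)\ge0$ and $\sum_m P_{n,t}(m)\le 1$, periodic in $t$ with period $T$. The demand is modeled by $\{0,1\}$-valued random variables $I_{n,t}(m)$ with $\Pr(I_{n,t}(m)=1)=P_{n,t}(m)$ and $\sum_m I_{n,t}(m)\le1$. Demands of distinct users in the same slot are independent. The load is $L_t=\sum_{m,n}S(m)I_{n,t}(m)$. Slot indices are taken modulo $T$, so $L_{-1}$ means $L_{T-1}$. The cost function $C:\mathbb{R}_+\to\mathbb{R}_+$ is smooth, strictly convex and monotonically increasing, with derivative $C'$. The set of active users is $\mathcal{B}_t(m)=\{n:\mathbb{E}[I_{n,t}(m)C'(L_t)-C'(L_{t-1})]>0\}$. *)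

theory Defs
  imports "HOL-Probability.Probability"
begin

text \<open>Users are indexed by n < N, items by m < M, slots by t < T.
  The demand indicator of user n for item m in slot t is I n t m, a random
  variable on the probability space Mu.\<close>

definition strictly_convex_on :: "real set \<Rightarrow> (real \<Rightarrow> real) \<Rightarrow> bool" where
  "strictly_convex_on S f \<longleftrightarrow> convex S \<and>
    (\<forall>x\<in>S. \<forall>y\<in>S. x \<noteq> y \<longrightarrow> (\<forall>u>0. \<forall>v>0. u + v = 1 \<longrightarrow>
        f (u * x + v * y) < u * f x + v * f y))"

definition load :: "nat \<Rightarrow> nat \<Rightarrow> (nat \<Rightarrow> real) \<Rightarrow> (nat \<Rightarrow> nat \<Rightarrow> nat \<Rightarrow> 'a \<Rightarrow> real) \<Rightarrow> nat \<Rightarrow> 'a \<Rightarrow> real" where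
  "load N M S I t \<omega> = (\<Sum>m<M. \<Sum>n<N. S m * I n t m \<omega>)"

text \<open>Previous slot, modulo T (so slot 0 is preceded by slot T-1).\<close>
definition prev_slot :: "nat \<Rightarrow> nat \<Rightarrow> nat" where
  "prev_slot T t = (t + T - 1) mod T"

definition active_set :: "'a measure \<Rightarrow> nat \<Rightarrow> nat \<Rightarrow> nat \<Rightarrow> (nat \<Rightarrow> real) \<Rightarrow> (real \<Rightarrow> real)
    \<Rightarrow> (nat \<Rightarrow> nat \<Rightarrow> nat \<Rightarrow> 'a \<Rightarrow> real) \<Rightarrow> nat \<Rightarrow> nat \<Rightarrow> nat set" where
  "active_set Mu N M T S C' I t m =
     {n \<in> {..<N}. (\<integral>\<omega>. I n t m \<omega> * C' (load N M S I t \<omega>)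
                          - C' (load N M S I (prev_slot T t) \<omega>) \<partial>Mu) > 0}"

definition objective :: "'a measure \<Rightarrow> nat \<Rightarrow> nat \<Rightarrow> nat \<Rightarrow> (nat \<Rightarrow> real) \<Rightarrow> (real \<Rightarrow> real) \<Rightarrow> (real \<Rightarrow> real)
    \<Rightarrow> (nat \<Rightarrow> nat \<Rightarrow> nat \<Rightarrow> 'a \<Rightarrow> real) \<Rightarrow> nat \<Rightarrow> real \<Rightarrow> real" where
  "objective Mu N M T S C C' I t x =
     (\<integral>\<omega>. C (load N M S I (prev_slot T t) \<omega>
               + (\<Sum>j<M. \<Sum>k\<in>active_set Mu N M T S C' I t j. x))
          + C (load N M S I t \<omega>
               - (\<Sum>j<M. \<Sum>k\<in>active_set Mu N M T S C' I t j. x * I k t j \<omega>)) \<partial>Mu)"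

end

theory Submission
  imports Defs
begin

lemma cont_param_integral:
  fixes F :: "real \<Rightarrow> 'a \<Rightarrow> real"
  assumes fm: "finite_measure Mu"
  and meas: "\<And>x. x \<in> {a..b} \<Longrightarrow> F x \<in> borel_measurable Mu"
  and bnd: "\<And>x \<omega>. x \<in> {a..b} \<Longrightarrow> \<omega> \<in> space Mu \<Longrightarrow> \<bar>F x \<omega>\<bar> \<le> B"
  and cont: "\<And>\<omega>. \<omega> \<in> space Mu \<Longrightarrow> continuous_on {a..b} (\<lambda>x. F x \<omega>)"
  shows "continuous_on {a..b} (\<lambda>x. \<integral>\<omega>. F x \<omega> \<partial>Mu)"
proof (rule continuous_on_sequentiallyI)
  fix u a0 assume u: "\<forall>n. u n \<in> {a..b}" and a0: "a0 \<in> {a..b}" and lim: "u \<longlonglongrightarrow> a0"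
  show "(\<lambda>n. \<integral>\<omega>. F (u n) \<omega> \<partial>Mu) \<longlonglongrightarrow> (\<integral>\<omega>. F a0 \<omega> \<partial>Mu)"
  proof (rule integral_dominated_convergence[where w="\<lambda>_. B"])
    show "F a0 \<in> borel_measurable Mu" using meas a0 .
    show "\<And>i. F (u i) \<in> borel_measurable Mu" using meas u by auto
    show "integrable Mu (\<lambda>_. B)" using finite_measure.integrable_const[OF fm] .
    show "AE x in Mu. (\<lambda>i. F (u i) x) \<longlonglongrightarrow> F a0 x"
    proof (rule AE_I2)
      fix \<omega> assume "\<omega> \<in> space Mu"
      from continuous_on_tendsto_compose[OF cont[OF this] lim a0] u
      show "(\<lambda>i. F (u i) \<omega>) \<longlonglongrightarrow> F a0 \<omega>" by auto
    qed
    show "\<And>i. AE x in Mu. norm (F (u i) x) \<le> B"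
      using bnd u by (auto intro!: AE_I2)
  qed
qed

lemma tangent_ineq:
  fixes C C' :: "real \<Rightarrow> real"
  assumes cv: "convex_on {0..} C"
  and d: "\<And>x. 0 \<le> x \<Longrightarrow> (C has_real_derivative C' x) (at x within {0..})"
  and y: "0 \<le> y" and c: "0 < c"
  shows "C' c * (y - c) \<le> C y - C c"
  using convex_on_imp_above_tangent[OF cv _ _ _ d] y c
  by (auto simp: interior_real_atLeast)

lemma strict_imp_convex:
  assumes "strictly_convex_on {0..} C"
  shows "convex_on {0..} C"
proof (rule convex_onI)
  show "convex {0::real..}" by simp
  fix t x y :: real assume t: "0 < t" "t < 1" and xy: "x \<in> {0..}" "y \<in> {0..}"
  show "C ((1 - t) *\<^sub>R x + t *\<^sub>R y) \<le> (1 - t) * C x + t * C y"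
  proof (cases "x = y")
    case True then show ?thesis by (simp add: algebra_simps)
  next
    case False
    with assms xy t have "C ((1-t) * x + t * y) < (1-t) * C x + t * C y"
      unfolding strictly_convex_on_def by auto
    then show ?thesis by simp
  qed
qed

theorem lemma3:
  fixes Mu :: "'a measure"
    and N M T :: nat
    and S :: "nat \<Rightarrow> real"
    and P :: "nat \<Rightarrow> nat \<Rightarrow> nat \<Rightarrow> real"
    and I :: "nat \<Rightarrow> nat \<Rightarrow> nat \<Rightarrow> 'a \<Rightarrow> real"
    and C C' :: "real \<Rightarrow> real"
    and D :: "nat \<Rightarrow> real \<Rightarrow> real"
    and t m :: nat
  assumes prob: "prob_space Mu"
    and T_pos: "0 < T" and M_pos: "0 < M"
    and S_pos: "\<And>j. j < M \<Longrightarrow> 0 < S j"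
    and P_nonneg: "\<And>n s j. n < N \<Longrightarrow> s < T \<Longrightarrow> j < M \<Longrightarrow> 0 \<le> P n s j"
    and P_sum: "\<And>n s. n < N \<Longrightarrow> s < T \<Longrightarrow> (\<Sum>j<M. P n s j) \<le> 1"
    and I_meas: "\<And>n s j. n < N \<Longrightarrow> s < T \<Longrightarrow> j < M \<Longrightarrow> I n s j \<in> borel_measurable Mu"
    and I_01: "\<And>n s j \<omega>. n < N \<Longrightarrow> s < T \<Longrightarrow> j < M \<Longrightarrow> \<omega> \<in> space Mu \<Longrightarrow> I n s j \<omega> \<in> {0, 1}"
    and I_prob: "\<And>n s j. n < N \<Longrightarrow> s < T \<Longrightarrow> j < M \<Longrightarrow>
                   measure Mu {\<omega> \<in> space Mu. I n s j \<omega> = 1} = P n s j"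
    and I_one: "\<And>n s \<omega>. n < N \<Longrightarrow> s < T \<Longrightarrow> \<omega> \<in> space Mu \<Longrightarrow> (\<Sum>j<M. I n s j \<omega>) \<le> 1"
    and I_indep: "\<And>s. s < T \<Longrightarrow>
                   prob_space.indep_vars Mu (\<lambda>_. PiM {..<M} (\<lambda>_. borel))
                     (\<lambda>n \<omega>. \<lambda>j\<in>{..<M}. I n s j \<omega>) {..<N}"
    and D0: "D 0 = C" and D1: "D 1 = C'"
    and D_deriv: "\<And>k x. 0 \<le> x \<Longrightarrow> (D k has_real_derivative D (Suc k) x) (at x within {0..})"
    and C_nonneg: "\<And>x. 0 \<le> x \<Longrightarrow> 0 \<le> C x"
    and C_strict_convex: "strictly_convex_on {0..} C"
    and C_mono: "mono_on {0..} C"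
    and t_lt: "t < T" and m_lt: "m < M"
    and B_ne: "active_set Mu N M T S C' I t m \<noteq> {}"
  shows "(\<exists>xh. is_arg_min (objective Mu N M T S C C' I t)
                 (\<lambda>x. 0 \<le> x \<and> x \<le> Min (S ` {..<M})) xh)
       \<and> (\<forall>xh. is_arg_min (objective Mu N M T S C C' I t)
                 (\<lambda>x. 0 \<le> x \<and> x \<le> Min (S ` {..<M})) xh \<longrightarrow> 0 < xh)"
proof -
  interpret prob_space Mu by (rule prob)
  define Bs where "Bs j = active_set Mu N M T S C' I t j" for j
  define pt where "pt = prev_slot T t"
  define A where "A \<omega> = load N M S I pt \<omega>" for \<omega>
  define L where "L \<omega> = load N M S I t \<omega>" for \<omega>
  define K :: real where "K = (\<Sum>j<M. real (card (Bs j)))"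
  define s where "s \<omega> = (\<Sum>j<M. \<Sum>k\<in>Bs j. I k t j \<omega>)" for \<omega>
  define Smin where "Smin = Min (S ` {..<M})"
  define R0 where "R0 = (\<Sum>j<M. \<Sum>n<N. S j)"
  define Cp where "Cp y = C (max 0 y)" for y
  define Cq where "Cq y = C' (max 0 y)" for y
  have pt: "pt < T" unfolding pt_def prev_slot_def using T_pos by simp
  have Bs_sub: "Bs j \<subseteq> {..<N}" for j unfolding Bs_def active_set_def by auto
  have fin: "finite (Bs j)" for j using Bs_sub finite_subset by blast
  have Ibd: "0 \<le> I n r j \<omega> \<and> I n r j \<omega> \<le> 1" if "\<omega> \<in> space Mu" "n < N" "r < T" "j < M" for n r j \<omega>
    using I_01[OF that(2,3,4,1)] by auto
  have SInn: "0 \<le> S j * I n r j \<omega>" if "\<omega> \<in> space Mu" "n < N" "r < T" "j < M" for n r j \<omega>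
    using Ibd[OF that] S_pos[OF that(4)] by simp
  have load_bd: "0 \<le> load N M S I r \<omega> \<and> load N M S I r \<omega> \<le> R0" if "\<omega> \<in> space Mu" "r < T" for r \<omega>
  proof
    show "0 \<le> load N M S I r \<omega>" unfolding load_def
      using Ibd[OF that(1) _ that(2)] S_pos by (intro sum_nonneg) (meson lessThan_iff less_imp_le mult_nonneg_nonneg)
    show "load N M S I r \<omega> \<le> R0" unfolding load_def R0_def
    proof (intro sum_mono)
      fix j n assume "j \<in> {..<M}" "n \<in> {..<N}"
      then show "S j * I n r j \<omega> \<le> S j" using Ibd[OF that(1) _ that(2), of n j] S_pos[of j]
        by (auto intro: mult_left_le)
    qed
  qed
  have A_bd: "0 \<le> A \<omega> \<and> A \<omega> \<le> R0" if "\<omega> \<in> space Mu" for \<omega>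
    unfolding A_def using load_bd[OF that pt] .
  have L_bd: "0 \<le> L \<omega> \<and> L \<omega> \<le> R0" if "\<omega> \<in> space Mu" for \<omega>
    unfolding L_def using load_bd[OF that t_lt] .
  have s_bd: "0 \<le> s \<omega> \<and> s \<omega> \<le> K" if "\<omega> \<in> space Mu" for \<omega>
  proof
    show "0 \<le> s \<omega>" unfolding s_def using Ibd[OF that _ t_lt] Bs_sub by (intro sum_nonneg) auto
    show "s \<omega> \<le> K" unfolding s_def K_def
    proof (intro sum_mono)
      fix j assume j: "j \<in> {..<M}"
      have "(\<Sum>k\<in>Bs j. I k t j \<omega>) \<le> (\<Sum>k\<in>Bs j. 1)"
        using Ibd[OF that _ t_lt] Bs_sub j by (intro sum_mono) auto
      then show "(\<Sum>k\<in>Bs j. I k t j \<omega>) \<le> real (card (Bs j))" by simp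
    qed
  qed
  have Smin_pos: "0 < Smin" unfolding Smin_def using M_pos S_pos by (subst Min_gr_iff) auto
  have Smin_le: "Smin \<le> S j" if "j < M" for j unfolding Smin_def using that by auto
  have key: "Smin * s \<omega> \<le> L \<omega>" if "\<omega> \<in> space Mu" for \<omega>
  proof -
    have "Smin * s \<omega> = (\<Sum>j<M. \<Sum>k\<in>Bs j. Smin * I k t j \<omega>)" unfolding s_def by (simp add: sum_distrib_left)
    also have "\<dots> \<le> (\<Sum>j<M. \<Sum>k\<in>Bs j. S j * I k t j \<omega>)"
      using Ibd[OF that _ t_lt] Bs_sub Smin_le by (intro sum_mono mult_right_mono) auto
    also have "\<dots> \<le> (\<Sum>j<M. \<Sum>k<N. S j * I k t j \<omega>)"
      using SInn[OF that _ t_lt] Bs_sub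
      by (intro sum_mono sum_mono2) auto
    also have "\<dots> = L \<omega>" unfolding L_def load_def ..
    finally show ?thesis .
  qed
  have K_pos: "0 < K"
  proof -
    have "real (card (Bs m)) \<le> K" unfolding K_def using m_lt by (intro member_le_sum) auto
    moreover have "card (Bs m) > 0" using B_ne fin[of m] unfolding Bs_def by (simp add: card_gt_0_iff)
    ultimately show ?thesis by linarith
  qed
  have load_meas: "load N M S I r \<in> borel_measurable Mu" if "r < T" for r
    unfolding load_def using that by (auto intro!: borel_measurable_sum borel_measurable_times I_meas)
  have A_meas: "A \<in> borel_measurable Mu" unfolding A_def[abs_def] using load_meas[OF pt] by simp
  have L_meas: "L \<in> borel_measurable Mu" unfolding L_def[abs_def] using load_meas[OF t_lt] by simp
  have s_meas: "s \<in> borel_measurable Mu" unfolding s_def[abs_def]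
    using Bs_sub t_lt by (auto intro!: borel_measurable_sum I_meas)
  have Ikt_meas: "I k t j \<in> borel_measurable Mu" if "k \<in> Bs j" "j < M" for k j
    using I_meas[of k t j] that Bs_sub t_lt by auto
  have dC: "(C has_real_derivative C' x) (at x within {0..})" if "0 \<le> x" for x
    using D_deriv[OF that, of 0] D0 D1 by simp
  have dC': "(C' has_real_derivative D 2 x) (at x within {0..})" if "0 \<le> x" for x
    using D_deriv[OF that, of 1] D1 by (simp add: numeral_2_eq_2)
  have contC: "continuous_on {0..} C"
    using dC by (auto simp: continuous_on_eq_continuous_within intro: DERIV_continuous)
  have contC': "continuous_on {0..} C'"
    using dC' by (auto simp: continuous_on_eq_continuous_within intro: DERIV_continuous)
  have contCp: "continuous_on UNIV Cp" unfolding Cp_def[abs_def]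
    by (rule continuous_on_compose2[OF contC]) (auto intro!: continuous_intros)
  have contCq: "continuous_on UNIV Cq" unfolding Cq_def[abs_def]
    by (rule continuous_on_compose2[OF contC']) (auto intro!: continuous_intros)
  have Cp_meas: "Cp \<in> borel_measurable borel" using contCp by (rule borel_measurable_continuous_onI)
  have Cq_meas: "Cq \<in> borel_measurable borel" using contCq by (rule borel_measurable_continuous_onI)
  define R where "R = R0 + K * Smin"
  obtain Bc where Bc: "\<And>y. y \<in> {0..R} \<Longrightarrow> \<bar>C y\<bar> \<le> Bc \<and> \<bar>C' y\<bar> \<le> Bc"
  proof -
    have "compact (C ` {0..R})" "compact (C' ` {0..R})"
      using contC contC' by (auto intro!: compact_continuous_image continuous_on_subset[where t="{0..R}"])
    then obtain b1 b2 where "\<forall>y\<in>C ` {0..R}. norm y \<le> b1" "\<forall>y\<in>C' ` {0..R}. norm y \<le> b2"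
      by (meson bounded_iff compact_imp_bounded)
    then show ?thesis using that[of "max b1 b2"] by force
  qed
  have Cp_bd: "\<bar>Cp y\<bar> \<le> Bc \<and> \<bar>Cq y\<bar> \<le> Bc" if "y \<le> R" for y
  proof -
    have "0 \<le> R0" unfolding R0_def using S_pos by (intro sum_nonneg) (auto intro: less_imp_le)
    then have "0 \<le> R" unfolding R_def using K_pos Smin_pos by simp
    then show ?thesis using Bc[of "max 0 y"] that unfolding Cp_def Cq_def by auto
  qed
  have intg: "integrable Mu f" if "f \<in> borel_measurable Mu" "\<And>\<omega>. \<omega> \<in> space Mu \<Longrightarrow> \<bar>f \<omega>\<bar> \<le> B" for f :: "'a \<Rightarrow> real" and B :: real
    using that by (intro integrable_const_bound[where B=B]) (auto intro!: AE_I2)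
  define F where "F x \<omega> = Cp (A \<omega> + K * x) + Cp (L \<omega> - x * s \<omega>)" for x \<omega>
  define G where "G x \<omega> = K * Cq (A \<omega> + K * x) - s \<omega> * Cq (L \<omega> - x * s \<omega>)" for x \<omega>
  define obj where "obj = objective Mu N M T S C C' I t"
  have sum1: "(\<Sum>j<M. \<Sum>k\<in>Bs j. x) = K * x" for x :: real
    unfolding K_def by (simp add: sum_distrib_right)
  have sum2: "(\<Sum>j<M. \<Sum>k\<in>Bs j. x * I k t j \<omega>) = x * s \<omega>" for x \<omega>
    unfolding s_def by (simp add: sum_distrib_left)
  have args: "0 \<le> A \<omega> + K * x \<and> A \<omega> + K * x \<le> R \<and> 0 \<le> L \<omega> - x * s \<omega> \<and> L \<omega> - x * s \<omega> \<le> R"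
    if "\<omega> \<in> space Mu" "x \<in> {0..Smin}" for \<omega> x
  proof -
    have "x * s \<omega> \<le> Smin * s \<omega>" using that s_bd[OF that(1)] by (auto intro: mult_right_mono)
    moreover have "K * x \<le> K * Smin" using that K_pos by auto
    moreover have "0 \<le> x * s \<omega>" using that s_bd[OF that(1)] by auto
    moreover have "0 \<le> K * Smin" using K_pos Smin_pos by simp
    moreover note A_bd[OF that(1)] L_bd[OF that(1)] key[OF that(1)]
    moreover have "0 \<le> x" using that by simp
    moreover have "0 \<le> K * x" using K_pos \<open>0 \<le> x\<close> by simp
    ultimately show ?thesis unfolding R_def by linarith
  qed
  have obj_eq: "obj x = (\<integral>\<omega>. F x \<omega> \<partial>Mu)" if "x \<in> {0..Smin}" for x
    unfolding obj_def objective_def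
    apply (fold Bs_def pt_def)
    apply (fold A_def L_def)
    apply (simp only: sum1 sum2)
    unfolding F_def
    apply (rule Bochner_Integration.integral_cong[OF refl])
    using args[OF _ that] unfolding Cp_def by auto
  have F_meas: "F x \<in> borel_measurable Mu" for x
    unfolding F_def[abs_def] using Cp_meas A_meas L_meas s_meas
    by (auto intro!: borel_measurable_add borel_measurable_diff borel_measurable_times measurable_compose[where f="\<lambda>\<omega>. A \<omega> + K * x"] measurable_compose[where f="\<lambda>\<omega>. L \<omega> - x * s \<omega>"])
  have G_meas: "G x \<in> borel_measurable Mu" for x
    unfolding G_def[abs_def] using Cq_meas A_meas L_meas s_meas
    by (auto intro!: borel_measurable_add borel_measurable_diff borel_measurable_times measurable_compose[where f="\<lambda>\<omega>. A \<omega> + K * x"] measurable_compose[where f="\<lambda>\<omega>. L \<omega> - x * s \<omega>"])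
  have F_bd: "\<bar>F x \<omega>\<bar> \<le> 2 * Bc" if "x \<in> {0..Smin}" "\<omega> \<in> space Mu" for x \<omega>
    using Cp_bd[of "A \<omega> + K * x"] Cp_bd[of "L \<omega> - x * s \<omega>"] args[OF that(2,1)]
    unfolding F_def by linarith
  have G_bd: "\<bar>G x \<omega>\<bar> \<le> 2 * K * Bc" if "x \<in> {0..Smin}" "\<omega> \<in> space Mu" for x \<omega>
  proof -
    have a: "\<bar>Cq (A \<omega> + K * x)\<bar> \<le> Bc" "\<bar>Cq (L \<omega> - x * s \<omega>)\<bar> \<le> Bc"
      using Cp_bd args[OF that(2,1)] by auto
    have "\<bar>K * Cq (A \<omega> + K * x)\<bar> \<le> K * Bc" using a K_pos by (simp add: abs_mult mult_left_mono)
    moreover have "\<bar>s \<omega> * Cq (L \<omega> - x * s \<omega>)\<bar> \<le> K * Bc" using a s_bd[OF that(2)]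
      by (simp add: abs_mult mult_mono)
    ultimately show ?thesis unfolding G_def by linarith
  qed
  have contF: "continuous_on {0..Smin} (\<lambda>x. \<integral>\<omega>. F x \<omega> \<partial>Mu)"
    by (rule cont_param_integral[OF _ F_meas F_bd]) (auto simp: F_def intro!: continuous_on_compose2[OF contCp] continuous_intros finite_measure_axioms)
  have contG: "continuous_on {0..Smin} (\<lambda>x. \<integral>\<omega>. G x \<omega> \<partial>Mu)"
    by (rule cont_param_integral[OF _ G_meas G_bd]) (auto simp: G_def intro!: continuous_on_compose2[OF contCq] continuous_intros finite_measure_axioms)
  have contObj: "continuous_on {0..Smin} obj"
    using contF by (rule continuous_on_cong[THEN iffD1, OF refl obj_eq[symmetric], rotated]) 
  obtain x1 where x1: "x1 \<in> {0..Smin}" "\<And>y. y \<in> {0..Smin} \<Longrightarrow> obj x1 \<le> obj y"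
    using continuous_attains_inf[OF compact_Icc _ contObj] Smin_pos by fastforce
  have Smin_eq: "Min (S ` {..<M}) = Smin" by (simp add: Smin_def)
  have act_pos: "0 < (\<integral>\<omega>. I k t j \<omega> * Cq (L \<omega>) - Cq (A \<omega>) \<partial>Mu)" if "j < M" "k \<in> Bs j" for j k
  proof -
    have "0 < (\<integral>\<omega>. I k t j \<omega> * C' (L \<omega>) - C' (A \<omega>) \<partial>Mu)"
      using that(2) unfolding Bs_def active_set_def L_def A_def pt_def by auto
    also have "(\<integral>\<omega>. I k t j \<omega> * C' (L \<omega>) - C' (A \<omega>) \<partial>Mu) = (\<integral>\<omega>. I k t j \<omega> * Cq (L \<omega>) - Cq (A \<omega>) \<partial>Mu)"
      by (rule Bochner_Integration.integral_cong[OF refl]) (use A_bd L_bd in \<open>auto simp: Cq_def\<close>)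
    finally show ?thesis .
  qed
  have act_int: "integrable Mu (\<lambda>\<omega>. I k t j \<omega> * Cq (L \<omega>) - Cq (A \<omega>))" if "j < M" "k \<in> Bs j" for j k
  proof (rule intg[of _ "2*Bc"])
    show "(\<lambda>\<omega>. I k t j \<omega> * Cq (L \<omega>) - Cq (A \<omega>)) \<in> borel_measurable Mu"
      using Ikt_meas[OF that(2,1)] Cq_meas A_meas L_meas by measurable
    fix \<omega> assume w: "\<omega> \<in> space Mu"
    have "k < N" using that Bs_sub by auto
    have a: "\<bar>Cq (L \<omega>)\<bar> \<le> Bc" "\<bar>Cq (A \<omega>)\<bar> \<le> Bc" using Cp_bd args[OF w, of 0] Smin_pos by auto
    have "\<bar>I k t j \<omega> * Cq (L \<omega>)\<bar> \<le> Bc"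
      using a Ibd[OF w \<open>k < N\<close> t_lt that(1)] by (simp add: abs_mult mult_le_one mult_le_cancel_right1 order_trans[OF mult_right_mono[of _ 1]])
    then show "\<bar>I k t j \<omega> * Cq (L \<omega>) - Cq (A \<omega>)\<bar> \<le> 2 * Bc" using a by linarith
  qed
  have g0: "(\<integral>\<omega>. G 0 \<omega> \<partial>Mu) < 0"
  proof -
    have "0 < (\<Sum>j<M. \<Sum>k\<in>Bs j. (\<integral>\<omega>. I k t j \<omega> * Cq (L \<omega>) - Cq (A \<omega>) \<partial>Mu))"
    proof (rule sum_pos2[of _ m])
      show "0 < (\<Sum>k\<in>Bs m. (\<integral>\<omega>. I k t m \<omega> * Cq (L \<omega>) - Cq (A \<omega>) \<partial>Mu))"
        using B_ne fin[of m] act_pos[OF m_lt] unfolding Bs_def[symmetric] by (intro sum_pos) auto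
      show "\<And>i. i \<in> {..<M} \<Longrightarrow> 0 \<le> (\<Sum>k\<in>Bs i. (\<integral>\<omega>. I k t i \<omega> * Cq (L \<omega>) - Cq (A \<omega>) \<partial>Mu))"
        using act_pos by (intro sum_nonneg) (auto intro: less_imp_le)
    qed (use m_lt in auto)
    also have "\<dots> = (\<integral>\<omega>. (\<Sum>j<M. \<Sum>k\<in>Bs j. I k t j \<omega> * Cq (L \<omega>) - Cq (A \<omega>)) \<partial>Mu)"
      using act_int by (simp add: Bochner_Integration.integral_sum Bochner_Integration.integrable_sum)
    also have "\<dots> = (\<integral>\<omega>. - G 0 \<omega> \<partial>Mu)"
      unfolding G_def s_def K_def
      by (simp add: sum_subtractf sum_distrib_right)
    finally show ?thesis by simp
  qed
  define g where "g x = (\<integral>\<omega>. G x \<omega> \<partial>Mu)" for x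
  have "0 \<in> {0..Smin}" using Smin_pos by simp
  then obtain d where d: "d > 0" "\<And>x'. x' \<in> {0..Smin} \<Longrightarrow> dist x' 0 < d \<Longrightarrow> dist (g x') (g 0) < - g 0"
    using contG g0 unfolding continuous_on_iff g_def by (metis neg_0_less_iff_less)
  define x0 where "x0 = min (d/2) (Smin/2)"
  have x0: "0 < x0" "x0 < Smin" "x0 \<in> {0..Smin}" using d Smin_pos unfolding x0_def by auto
  have "x0 < d" using d unfolding x0_def by auto
  then have "\<bar>g x0 - g 0\<bar> < - g 0" using d(2)[OF x0(3)] x0 unfolding dist_real_def by auto
  then have gx0: "g x0 < 0" by linarith
  have pw: "F x0 \<omega> - F 0 \<omega> \<le> x0 * G x0 \<omega>" if w: "\<omega> \<in> space Mu" for \<omega>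
  proof -
    note ar = args[OF w x0(3)]
    have cv: "convex_on {0..} C" by (rule strict_imp_convex[OF C_strict_convex])
    have e1: "Cp (A \<omega> + K * x0) = C (A \<omega> + K * x0)" "Cq (A \<omega> + K * x0) = C' (A \<omega> + K * x0)"
      "Cp (L \<omega> - x0 * s \<omega>) = C (L \<omega> - x0 * s \<omega>)" "Cq (L \<omega> - x0 * s \<omega>) = C' (L \<omega> - x0 * s \<omega>)"
      using ar unfolding Cp_def Cq_def by auto
    have e0: "F 0 \<omega> = C (A \<omega>) + C (L \<omega>)" unfolding F_def Cp_def using A_bd[OF w] L_bd[OF w] by auto
    have "0 < K * x0" using K_pos x0 by simp
    then have "0 < A \<omega> + K * x0" using A_bd[OF w] by linarith
    then have t1: "C (A \<omega> + K * x0) - C (A \<omega>) \<le> K * x0 * C' (A \<omega> + K * x0)"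
      using tangent_ineq[OF cv dC, of "A \<omega>" "A \<omega> + K * x0"] A_bd[OF w] K_pos x0
      by (simp add: algebra_simps)
    have t2: "C (L \<omega> - x0 * s \<omega>) - C (L \<omega>) \<le> - (x0 * s \<omega>) * C' (L \<omega> - x0 * s \<omega>)"
    proof (cases "s \<omega> = 0")
      case True then show ?thesis by simp
    next
      case False
      then have "0 < s \<omega>" using s_bd[OF w] by simp
      then have "x0 * s \<omega> < Smin * s \<omega>" using x0 by simp
      then have "0 < L \<omega> - x0 * s \<omega>" using key[OF w] by linarith
      from tangent_ineq[OF cv dC, of "L \<omega>" "L \<omega> - x0 * s \<omega>"] this L_bd[OF w]
      show ?thesis by (simp add: algebra_simps)
    qed
    show ?thesis unfolding e0 using t1 t2 unfolding F_def G_def e1 by (simp add: algebra_simps)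
  qed
  have intF: "integrable Mu (F x)" if "x \<in> {0..Smin}" for x
    using intg[OF F_meas F_bd[OF that]] .
  have intG: "integrable Mu (G x)" if "x \<in> {0..Smin}" for x
    using intg[OF G_meas G_bd[OF that]] .
  have "obj x0 - obj 0 = (\<integral>\<omega>. F x0 \<omega> - F 0 \<omega> \<partial>Mu)"
    using obj_eq[OF x0(3)] obj_eq[OF \<open>0 \<in> {0..Smin}\<close>] intF[OF x0(3)] intF[OF \<open>0 \<in> {0..Smin}\<close>]
    by (simp add: Bochner_Integration.integral_diff)
  also have "\<dots> \<le> (\<integral>\<omega>. x0 * G x0 \<omega> \<partial>Mu)"
    using pw intF[OF x0(3)] intF[OF \<open>0 \<in> {0..Smin}\<close>] intG[OF x0(3)]
    by (intro integral_mono) auto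
  also have "\<dots> = x0 * g x0" unfolding g_def by simp
  also have "\<dots> < 0" using x0 gx0 by (simp add: mult_pos_neg)
  finally have better: "obj x0 < obj 0" by simp
  show ?thesis
  proof
    show "\<exists>xh. is_arg_min (objective Mu N M T S C C' I t) (\<lambda>x. 0 \<le> x \<and> x \<le> Min (S ` {..<M})) xh"
      using x1 unfolding is_arg_min_def Smin_eq obj_def[symmetric] by (auto simp: not_less)
    show "\<forall>xh. is_arg_min (objective Mu N M T S C C' I t) (\<lambda>x. 0 \<le> x \<and> x \<le> Min (S ` {..<M})) xh \<longrightarrow> 0 < xh"
    proof (intro allI impI)
      fix xh assume "is_arg_min (objective Mu N M T S C C' I t) (\<lambda>x. 0 \<le> x \<and> x \<le> Min (S ` {..<M})) xh"
      then have h: "0 \<le> xh" "\<And>y. 0 \<le> y \<Longrightarrow> y \<le> Smin \<Longrightarrow> \<not> obj y < obj xh"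
        unfolding is_arg_min_def Smin_eq obj_def[symmetric] by auto
      show "0 < xh"
      proof (rule ccontr)
        assume "\<not> 0 < xh" then have "xh = 0" using h by simp
        then show False using h(2)[of x0] better x0 by auto
      qed
    qed
  qed
qed

end
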